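(* Let $q$ be a prime power and $n,k,\delta$ positive integers with $k\le n$ and $\delta\le 2k$. Put $h=\left\lfloor k+1-\frac{\delta}{2}\right\rfloor$. Then $$B_q(n,k,\delta;3)\le\left(1+\frac{1}{2\left[{k\atop h}\right]_q-1}\right)\frac{\left[{n\atop h}\right]_q}{\left[{k\atop h}\right]_q}.$$
   Context: For a prime power $q$, $\mathcal{G}_q(n,k)$ denotes the set of all $k$-dimensional subspaces of $\mathbb{F}_q^n$, and the Gaussian binomial coefficient is $\left[{n\atop k}\right]_q=\prod_{i=0}^{k-1}\frac{q^n-q^i}{q^k-q^i}=|\mathcal{G}_q(n,k)|$. An $\alpha$-$(n,k,\delta)_q^c$ covering Grassmannian code is a subset $\mathcal{C}\subseteq\mathcal{G}_q(n,k)$ (no repeated codewords) such that every set of $\alpha$ distinct codewords of $\mathcal{C}$ spans a subspace of $\mathbb{F}_q^n$ of dimension at least $k+\delta$. $B_q(n,k,\delta;\alpha)$ denotes the maximum size of an $\alpha$-$(n,k,\delta)_q^c$ code. *)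

theory Defs
  imports Complex_Main "HOL.Vector_Spaces" "HOL-Library.Function_Algebras"
begin

text \<open>Ambient space F_q^n: functions nat => 'a vanishing at all indices >= n,
  with 'a a finite field of size q = CARD('a).\<close>

definition fscale :: "'a::field \<Rightarrow> (nat \<Rightarrow> 'a) \<Rightarrow> (nat \<Rightarrow> 'a)" where
  "fscale c v = (\<lambda>i. c * v i)"

global_interpretation fvs: vector_space "fscale :: 'a::field \<Rightarrow> (nat \<Rightarrow> 'a) \<Rightarrow> (nat \<Rightarrow> 'a)"
  by unfold_locales (auto simp: fscale_def fun_eq_iff algebra_simps)

definition Fqn :: "nat \<Rightarrow> (nat \<Rightarrow> 'a::field) set" where
  "Fqn n = {v. \<forall>i\<ge>n. v i = 0}"

definition Grass :: "nat \<Rightarrow> nat \<Rightarrow> (nat \<Rightarrow> 'a::field) set set" where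
  "Grass n k = {W. fvs.subspace W \<and> W \<subseteq> Fqn n \<and> fvs.dim W = k}"

definition covering_code ::
  "nat \<Rightarrow> nat \<Rightarrow> nat \<Rightarrow> nat \<Rightarrow> (nat \<Rightarrow> 'a::field) set set \<Rightarrow> bool" where
  "covering_code \<alpha> n k \<delta> C \<longleftrightarrow> C \<subseteq> Grass n k \<and>
     (\<forall>S \<subseteq> C. card S = \<alpha> \<longrightarrow> fvs.dim (fvs.span (\<Union>S)) \<ge> k + \<delta>)"

definition Bq :: "'a::{field,finite} itself \<Rightarrow> nat \<Rightarrow> nat \<Rightarrow> nat \<Rightarrow> nat \<Rightarrow> nat" where
  "Bq _ n k \<delta> \<alpha> = Max (card ` {C :: (nat \<Rightarrow> 'a) set set. covering_code \<alpha> n k \<delta> C})"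

definition gauss_binom :: "nat \<Rightarrow> nat \<Rightarrow> nat \<Rightarrow> real" where
  "gauss_binom q n k = (\<Prod>i<k. (real q ^ n - real q ^ i) / (real q ^ k - real q ^ i))"

end

theory Submission
  imports Defs "HOL-Library.FuncSet"
begin


lemma Fqn_subspace: "fvs.subspace (Fqn n)"
  by (rule fvs.subspaceI) (auto simp: Fqn_def fscale_def)

lemma Fqn_bij: "bij_betw (\<lambda>f. restrict f {..<n}) (Fqn n :: (nat \<Rightarrow> 'a::field) set) (PiE {..<n} (\<lambda>_. UNIV))"
proof (rule bij_betwI[where g = "\<lambda>f i. if i < n then f i else 0"])
  show "(\<lambda>f. restrict f {..<n}) \<in> Fqn n \<rightarrow> PiE {..<n} (\<lambda>_. UNIV)" by auto
  show "(\<lambda>f i. if i < n then f i else 0) \<in> PiE {..<n} (\<lambda>_. UNIV) \<rightarrow> (Fqn n :: (nat \<Rightarrow> 'a::field) set)"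
    by (auto simp: Fqn_def)
  show "\<And>x. x \<in> (Fqn n :: (nat \<Rightarrow> 'a::field) set) \<Longrightarrow> (\<lambda>i. if i < n then restrict x {..<n} i else 0) = x"
    by (auto simp: Fqn_def fun_eq_iff)
  show "\<And>y. y \<in> PiE {..<n} (\<lambda>_. UNIV::'a set) \<Longrightarrow> restrict (\<lambda>i. if i < n then y i else 0) {..<n} = y"
    by (auto simp: fun_eq_iff PiE_def extensional_def)
qed

lemma Fqn_card: "finite (Fqn n :: (nat \<Rightarrow> 'a::{field,finite}) set) \<and> card (Fqn n :: (nat \<Rightarrow> 'a) set) = card (UNIV::'a set) ^ n"
proof -
  have f: "finite (PiE {..<n} (\<lambda>_. UNIV::'a set))" by (simp add: finite_PiE)
  have c: "card (PiE {..<n} (\<lambda>_. UNIV::'a set)) = card (UNIV::'a set) ^ n" by (simp add: card_PiE)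
  show ?thesis using Fqn_bij[where 'a='a and n=n] f c
    by (metis bij_betw_finite bij_betw_same_card)
qed

lemma card_span_insert:
  fixes X :: "(nat \<Rightarrow> 'a::{field,finite}) set"
  assumes fin: "finite (fvs.span X)" and w: "w \<notin> fvs.span X"
  shows "finite (fvs.span (insert w X)) \<and> card (fvs.span (insert w X)) = card (UNIV::'a set) * card (fvs.span X)"
proof -
  let ?f = "\<lambda>(c::'a, v). fscale c w + v"
  have bij: "bij_betw ?f ((UNIV::'a set) \<times> fvs.span X) (fvs.span (insert w X))"
  proof (rule bij_betw_imageI)
    show "inj_on ?f ((UNIV::'a set) \<times> fvs.span X)"
    proof (rule inj_onI, clarify)
      fix c v c' v' assume v: "v \<in> fvs.span X" and v': "v' \<in> fvs.span X"
        and eq: "fscale c w + v = fscale c' w + v'"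
      have "fscale (c - c') w = v' - v"
        using eq by (auto simp: fscale_def fun_eq_iff algebra_simps dest!: fun_cong)
      hence "fscale (c - c') w \<in> fvs.span X" using v v' fvs.span_diff by auto
      hence cc: "c = c'"
      proof (rule contrapos_pp)
        assume "c \<noteq> c'"
        hence "w = fscale (inverse (c - c')) (fscale (c - c') w)"
          by (simp add: fscale_def fun_eq_iff)
        thus "fscale (c - c') w \<notin> fvs.span X" using w fvs.span_scale by metis
      qed
      thus "c = c' \<and> v = v'" using eq by simp
    qed
    show "?f ` ((UNIV::'a set) \<times> fvs.span X) = fvs.span (insert w X)"
    proof
      show "?f ` ((UNIV::'a set) \<times> fvs.span X) \<subseteq> fvs.span (insert w X)"
        using fvs.span_add fvs.span_scale fvs.span_base fvs.span_mono
        by (smt (verit, del_insts) SigmaE case_prod_conv image_subset_iff insertI1 subset_insertI subsetD)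
      show "fvs.span (insert w X) \<subseteq> ?f ` ((UNIV::'a set) \<times> fvs.span X)"
      proof
        fix x assume "x \<in> fvs.span (insert w X)"
        then obtain k where k: "x - fscale k w \<in> fvs.span X" unfolding fvs.span_insert by auto
        have "x = ?f (k, x - fscale k w)" by simp
        thus "x \<in> ?f ` ((UNIV::'a set) \<times> fvs.span X)" using k by blast
      qed
    qed
  qed
  have "finite ((UNIV::'a set) \<times> fvs.span X)" using fin by (simp add: finite_cartesian_product)
  moreover have "card ((UNIV::'a set) \<times> fvs.span X) = card (UNIV::'a set) * card (fvs.span X)" by (simp add: card_cartesian_product)
  ultimately show ?thesis using bij by (metis bij_betw_finite bij_betw_same_card)
qed

lemma card_span_indep:
  fixes B :: "(nat \<Rightarrow> 'a::{field,finite}) set"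
  assumes "finite B" "fvs.independent B"
  shows "finite (fvs.span B) \<and> card (fvs.span B) = card (UNIV::'a set) ^ card B"
  using assms
proof (induction B rule: finite_induct)
  case empty then show ?case by (simp add: fvs.span_empty)
next
  case (insert b B)
  have iB: "fvs.independent B" and nb: "b \<notin> fvs.span B"
    using insert.prems insert.hyps(2) by (auto simp: fvs.independent_insert)
  from insert.IH[OF iB] card_span_insert[OF _ nb] insert.hyps show ?case by auto
qed

lemma sub_card:
  fixes V :: "(nat \<Rightarrow> 'a::{field,finite}) set"
  assumes "fvs.subspace V" "V \<subseteq> Fqn n"
  shows "finite V \<and> card V = card (UNIV::'a set) ^ fvs.dim V"
proof -
  obtain B where B: "B \<subseteq> V" "fvs.independent B" "V \<subseteq> fvs.span B" "card B = fvs.dim V"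
    by (rule fvs.basis_exists)
  have fV: "finite V" using assms(2) Fqn_card[where 'a='a] finite_subset by blast
  have "finite B" using B(1) fV finite_subset by blast
  moreover have "fvs.span B = V" using B assms(1) fvs.span_subspace by blast
  ultimately show ?thesis using card_span_indep[OF _ B(2)] B(4) by auto
qed



lemma q_ge2: "2 \<le> card (UNIV::'a::{field,finite} set)"
proof -
  have "card {0::'a, 1} = 2" by simp
  moreover have "card {0::'a, 1} \<le> card (UNIV::'a set)" by (rule card_mono) auto
  ultimately show ?thesis by simp
qed

definition SS :: "(nat \<Rightarrow> 'a::field) set \<Rightarrow> bool" where
  "SS V \<longleftrightarrow> (\<exists>n. fvs.subspace V \<and> V \<subseteq> Fqn n)"

lemma SS_card: "SS (V :: (nat \<Rightarrow> 'a::{field,finite}) set) \<Longrightarrow> finite V \<and> card V = card (UNIV::'a set) ^ fvs.dim V"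
  unfolding SS_def using sub_card by blast

lemma SS_sub: "SS V \<Longrightarrow> fvs.subspace W \<Longrightarrow> W \<subseteq> V \<Longrightarrow> SS W"
  unfolding SS_def by blast

lemma SS_Int: "SS V \<Longrightarrow> SS W \<Longrightarrow> SS (V \<inter> W)"
  unfolding SS_def using fvs.subspace_inter by blast

lemma SS_subspace: "SS V \<Longrightarrow> fvs.subspace V" unfolding SS_def by blast

lemma SS_span_Un: assumes "V \<subseteq> Fqn n" "W \<subseteq> Fqn n" shows "SS (fvs.span (V \<union> W))"
  unfolding SS_def using assms Fqn_subspace fvs.span_minimal by (metis Un_subset_iff fvs.subspace_span)

lemma SS_Fqn: "SS (Fqn n)" unfolding SS_def using Fqn_subspace by blast

lemma pow_inj: "(card (UNIV::'a::{field,finite} set)) ^ a = card (UNIV::'a set) ^ b \<Longrightarrow> a = b"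
  using q_ge2[where 'a='a] by (simp add: power_inject_exp)

lemma pow_le: "(card (UNIV::'a::{field,finite} set)) ^ a \<le> card (UNIV::'a set) ^ b \<Longrightarrow> a \<le> b"
  using q_ge2[where 'a='a] by (simp add: power_le_imp_le_exp)

lemma dim_card:
  fixes V :: "(nat \<Rightarrow> 'a::{field,finite}) set"
  assumes "SS V" "card V = card (UNIV::'a set) ^ m" shows "fvs.dim V = m"
  using SS_card[OF assms(1)] assms(2) pow_inj[where 'a='a] by metis

lemma dim_mono:
  fixes V :: "(nat \<Rightarrow> 'a::{field,finite}) set"
  assumes "SS V" "SS W" "V \<subseteq> W" shows "fvs.dim V \<le> fvs.dim W"
proof -
  have "card V \<le> card W" using SS_card[OF assms(2)] assms(3) card_mono by blast
  thus ?thesis using SS_card[OF assms(1)] SS_card[OF assms(2)] pow_le[where 'a='a] by metis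
qed

lemma dim_eq_sub:
  fixes V :: "(nat \<Rightarrow> 'a::{field,finite}) set"
  assumes "SS V" "SS W" "V \<subseteq> W" "fvs.dim W \<le> fvs.dim V" shows "V = W"
proof -
  have "fvs.dim V = fvs.dim W" using dim_mono[OF assms(1-3)] assms(4) by simp
  hence "card V = card W" using SS_card[OF assms(1)] SS_card[OF assms(2)] by simp
  thus ?thesis using SS_card[OF assms(2)] assms(3) card_subset_eq by blast
qed

lemma dim_Fqn: "fvs.dim (Fqn n :: (nat \<Rightarrow> 'a::{field,finite}) set) = n"
  using dim_card[OF SS_Fqn] Fqn_card by blast

lemma card_sum_formula:
  fixes X Y :: "(nat \<Rightarrow> 'a::{field,finite}) set"
  assumes X: "fvs.subspace X" "finite X" and Y: "fvs.subspace Y" "finite Y"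
  shows "card (fvs.span (X \<union> Y)) * card (X \<inter> Y) = card X * card Y"
proof -
  have spX: "fvs.span X = X" using X by simp
  have spY: "fvs.span Y = Y" using Y by simp
  have SU: "fvs.span (X \<union> Y) = {x + y | x y. x \<in> X \<and> y \<in> Y}"
    using fvs.span_Un[of X Y] spX spY by simp
  define F where "F z = {p \<in> X \<times> Y. fst p + snd p = z}" for z
  have XY: "X \<times> Y = (\<Union>z\<in>fvs.span (X \<union> Y). F z)"
  proof
    show "X \<times> Y \<subseteq> (\<Union>z\<in>fvs.span (X \<union> Y). F z)"
    proof
      fix p assume p: "p \<in> X \<times> Y"
      hence "fst p + snd p \<in> fvs.span (X \<union> Y)" unfolding SU by (auto simp: mem_Times_iff)
      moreover have "p \<in> F (fst p + snd p)" using p unfolding F_def by simp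
      ultimately show "p \<in> (\<Union>z\<in>fvs.span (X \<union> Y). F z)" by blast
    qed
  qed (auto simp: F_def)
  have finSU: "finite (fvs.span (X \<union> Y))"
  proof -
    have "fvs.span (X \<union> Y) = (\<lambda>p. fst p + snd p) ` (X \<times> Y)" unfolding SU by force
    thus ?thesis using X Y by simp
  qed
  have cF: "card (F z) = card (X \<inter> Y)" if z: "z \<in> fvs.span (X \<union> Y)" for z
  proof -
    obtain x0 y0 where x0: "x0 \<in> X" and y0: "y0 \<in> Y" and zz: "z = x0 + y0" using z unfolding SU by auto
    have "bij_betw (\<lambda>t. (x0 + t, y0 - t)) (X \<inter> Y) (F z)"
    proof (rule bij_betwI[where g = "\<lambda>p. fst p - x0"])
      show "(\<lambda>t. (x0 + t, y0 - t)) \<in> X \<inter> Y \<rightarrow> F z"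
        unfolding F_def zz using x0 y0 X Y
        by (auto intro: fvs.subspace_add fvs.subspace_diff)
      show "(\<lambda>p. fst p - x0) \<in> F z \<rightarrow> X \<inter> Y"
      proof
        fix p assume p: "p \<in> F z"
        then obtain a b where ab: "p = (a, b)" "a \<in> X" "b \<in> Y" "a + b = x0 + y0" unfolding F_def zz by auto
        have "a - x0 = y0 - b" using ab(4) by (simp add: algebra_simps fun_eq_iff)
        thus "(\<lambda>p. fst p - x0) p \<in> X \<inter> Y" using ab x0 y0 X Y fvs.subspace_diff by fastforce
      qed
      show "\<And>t. t \<in> X \<inter> Y \<Longrightarrow> fst (x0 + t, y0 - t) - x0 = t" by simp
      show "\<And>p. p \<in> F z \<Longrightarrow> (x0 + (fst p - x0), y0 - (fst p - x0)) = p"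
        unfolding F_def zz by (auto simp: algebra_simps)
    qed
    thus ?thesis by (simp add: bij_betw_same_card)
  qed
  have "card X * card Y = card (X \<times> Y)" by (simp add: card_cartesian_product)
  also have "\<dots> = (\<Sum>z\<in>fvs.span (X \<union> Y). card (F z))"
    unfolding XY
  proof (rule card_UN_disjoint[OF finSU])
    show "\<forall>z\<in>fvs.span (X \<union> Y). finite (F z)" using X Y unfolding F_def by auto
    show "\<forall>z\<in>fvs.span (X \<union> Y). \<forall>z'\<in>fvs.span (X \<union> Y). z \<noteq> z' \<longrightarrow> F z \<inter> F z' = {}"
      unfolding F_def by auto
  qed
  also have "\<dots> = card (fvs.span (X \<union> Y)) * card (X \<inter> Y)" using cF by simp
  finally show ?thesis by simp
qed

lemma dim_sum_formula:
  fixes X Y :: "(nat \<Rightarrow> 'a::{field,finite}) set"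
  assumes "X \<subseteq> Fqn n" "Y \<subseteq> Fqn n" "fvs.subspace X" "fvs.subspace Y"
  shows "fvs.dim (fvs.span (X \<union> Y)) + fvs.dim (X \<inter> Y) = fvs.dim X + fvs.dim Y"
proof -
  have sX: "SS X" and sY: "SS Y" using assms unfolding SS_def by blast+
  have sU: "SS (fvs.span (X \<union> Y))" using SS_span_Un assms by blast
  have sI: "SS (X \<inter> Y)" using SS_Int sX sY by blast
  have "card (fvs.span (X \<union> Y)) * card (X \<inter> Y) = card X * card Y"
    using card_sum_formula assms SS_card sX sY by blast
  hence "card (UNIV::'a set) ^ (fvs.dim (fvs.span (X \<union> Y)) + fvs.dim (X \<inter> Y)) = card (UNIV::'a set) ^ (fvs.dim X + fvs.dim Y)"
    using SS_card[OF sX] SS_card[OF sY] SS_card[OF sU] SS_card[OF sI] by (simp add: power_add)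
  thus ?thesis using pow_inj by blast
qed



definition LL :: "(nat \<Rightarrow> 'a::field) set \<Rightarrow> nat \<Rightarrow> (nat \<Rightarrow> 'a) list set" where
  "LL V m = {xs. length xs = m \<and> distinct xs \<and> set xs \<subseteq> V \<and> fvs.independent (set xs)}"

definition Gr :: "(nat \<Rightarrow> 'a::field) set \<Rightarrow> nat \<Rightarrow> (nat \<Rightarrow> 'a) set set" where
  "Gr V h = {W. fvs.subspace W \<and> W \<subseteq> V \<and> fvs.dim W = h}"

lemma LL_finite: "finite V \<Longrightarrow> finite (LL V m)"
proof -
  assume "finite V"
  hence "finite {xs. set xs \<subseteq> V \<and> length xs = m}" by (rule finite_lists_length_eq)
  thus ?thesis by (rule finite_subset[rotated]) (auto simp: LL_def)
qed

lemma card_LL: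
  fixes V :: "(nat \<Rightarrow> 'a::{field,finite}) set"
  assumes V: "SS V" shows "m \<le> fvs.dim V \<Longrightarrow> card (LL V m) = (\<Prod>i<m. card (UNIV::'a set) ^ fvs.dim V - card (UNIV::'a set) ^ i)"
proof (induction m)
  case 0
  have "LL V 0 = {[]}" by (auto simp: LL_def fvs.independent_empty)
  thus ?case by simp
next
  case (Suc m)
  let ?q = "card (UNIV::'a set)"
  have fV: "finite V" and cV: "card V = ?q ^ fvs.dim V" using SS_card[OF V] by auto
  have sV: "fvs.subspace V" using V SS_subspace by blast
  have eq: "LL V (Suc m) = (\<lambda>(xs,x). x # xs) ` (SIGMA xs:LL V m. V - fvs.span (set xs))"
  proof
    show "LL V (Suc m) \<subseteq> (\<lambda>(xs,x). x # xs) ` (SIGMA xs:LL V m. V - fvs.span (set xs))"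
    proof
      fix ys assume ys: "ys \<in> LL V (Suc m)"
      then obtain x xs where yy: "ys = x # xs" by (cases ys) (auto simp: LL_def)
      have "xs \<in> LL V m" "x \<in> V" "x \<notin> fvs.span (set xs)"
        using ys unfolding yy LL_def by (auto simp: fvs.independent_insert dest: fvs.independent_mono)
      thus "ys \<in> (\<lambda>(xs,x). x # xs) ` (SIGMA xs:LL V m. V - fvs.span (set xs))"
        unfolding yy by force
    qed
    show "(\<lambda>(xs,x). x # xs) ` (SIGMA xs:LL V m. V - fvs.span (set xs)) \<subseteq> LL V (Suc m)"
    proof clarify
      fix xs x assume xs: "xs \<in> LL V m" and x: "x \<in> V" "x \<notin> fvs.span (set xs)"
      have "x \<notin> set xs" using x fvs.span_base by blast
      thus "x # xs \<in> LL V (Suc m)" using xs x unfolding LL_def by (auto simp: fvs.independent_insertI)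
    qed
  qed
  have inj: "inj_on (\<lambda>(xs,x). x # xs) (SIGMA xs:LL V m. V - fvs.span (set xs))"
    by (auto simp: inj_on_def)
  have cD: "card (V - fvs.span (set xs)) = ?q ^ fvs.dim V - ?q ^ m" if xs: "xs \<in> LL V m" for xs
  proof -
    have sub: "fvs.span (set xs) \<subseteq> V" using xs sV fvs.span_minimal unfolding LL_def by blast
    have "card (fvs.span (set xs)) = ?q ^ card (set xs)"
      using card_span_indep[of "set xs"] xs unfolding LL_def by auto
    also have "card (set xs) = m" using xs unfolding LL_def by (simp add: distinct_card)
    finally show ?thesis using card_Diff_subset[OF finite_subset[OF sub fV] sub] cV by simp
  qed
  have "card (LL V (Suc m)) = card (SIGMA xs:LL V m. V - fvs.span (set xs))"
    unfolding eq by (rule card_image[OF inj])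
  also have "\<dots> = (\<Sum>xs\<in>LL V m. card (V - fvs.span (set xs)))"
    using LL_finite[OF fV] fV by (intro card_SigmaI) auto
  also have "\<dots> = card (LL V m) * (?q ^ fvs.dim V - ?q ^ m)" using cD by simp
  finally show ?case using Suc by simp
qed

lemma Gr_finite: "finite V \<Longrightarrow> finite (Gr V h)"
  by (rule finite_subset[of _ "Pow V"]) (auto simp: Gr_def)

lemma real_prod:
  assumes "h \<le> d" "q > 0" shows "real (\<Prod>i<h. (q::nat) ^ d - q ^ i) = (\<Prod>i<h. real q ^ d - real q ^ i)"
proof -
  have "real (\<Prod>i<h. q ^ d - q ^ i) = (\<Prod>i<h. real (q ^ d - q ^ i))" by simp
  also have "\<dots> = (\<Prod>i<h. real q ^ d - real q ^ i)"
  proof (rule prod.cong[OF refl])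
    fix i assume "i \<in> {..<h}"
    hence "i \<le> d" using assms by simp
    hence "q ^ i \<le> q ^ d" using assms(2) by (simp add: power_increasing)
    thus "real (q ^ d - q ^ i) = real q ^ d - real q ^ i" by (simp add: of_nat_diff)
  qed
  finally show ?thesis .
qed

lemma card_Gr:
  fixes V :: "(nat \<Rightarrow> 'a::{field,finite}) set"
  assumes V: "SS V" and h: "h \<le> fvs.dim V"
  shows "real (card (Gr V h)) = gauss_binom (card (UNIV::'a set)) (fvs.dim V) h"
proof -
  let ?q = "card (UNIV::'a set)"
  have fV: "finite V" using SS_card[OF V] by auto
  have sV: "fvs.subspace V" using V SS_subspace by blast
  have spanW: "fvs.span (set xs) = W" if W: "W \<in> Gr V h" and xs: "xs \<in> LL W h" for W xs
  proof -
    have SW: "SS W" using W V SS_sub unfolding Gr_def by blast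
    have sub: "fvs.span (set xs) \<subseteq> W" using xs W fvs.span_minimal unfolding LL_def Gr_def by blast
    have SP: "SS (fvs.span (set xs))" using SS_sub[OF SW] sub by simp
    have "fvs.dim (fvs.span (set xs)) = card (set xs)" using xs fvs.dim_span_eq_card_independent unfolding LL_def by blast
    also have "\<dots> = h" using xs unfolding LL_def by (simp add: distinct_card)
    finally show ?thesis using dim_eq_sub[OF SP SW sub] W unfolding Gr_def by simp
  qed
  have un: "LL V h = (\<Union>W\<in>Gr V h. LL W h)"
  proof
    show "LL V h \<subseteq> (\<Union>W\<in>Gr V h. LL W h)"
    proof
      fix xs assume xs: "xs \<in> LL V h"
      let ?W = "fvs.span (set xs)"
      have "?W \<subseteq> V" using xs sV fvs.span_minimal unfolding LL_def by blast
      moreover have "fvs.dim ?W = h"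
      proof -
        have "fvs.dim ?W = card (set xs)" using xs fvs.dim_span_eq_card_independent unfolding LL_def by blast
        thus ?thesis using xs unfolding LL_def by (simp add: distinct_card)
      qed
      ultimately have "?W \<in> Gr V h" unfolding Gr_def by simp
      moreover have "xs \<in> LL ?W h" using xs fvs.span_superset unfolding LL_def by auto
      ultimately show "xs \<in> (\<Union>W\<in>Gr V h. LL W h)" by blast
    qed
    show "(\<Union>W\<in>Gr V h. LL W h) \<subseteq> LL V h" unfolding Gr_def LL_def by blast
  qed
  have "card (LL V h) = (\<Sum>W\<in>Gr V h. card (LL W h))"
    unfolding un
  proof (rule card_UN_disjoint)
    show "finite (Gr V h)" using Gr_finite[OF fV] .
    show "\<forall>W\<in>Gr V h. finite (LL W h)" using fV LL_finite finite_subset unfolding Gr_def by (metis mem_Collect_eq)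
    show "\<forall>W\<in>Gr V h. \<forall>W'\<in>Gr V h. W \<noteq> W' \<longrightarrow> LL W h \<inter> LL W' h = {}"
      using spanW by blast
  qed
  also have "\<dots> = (\<Sum>W\<in>Gr V h. (\<Prod>i<h. ?q ^ h - ?q ^ i))"
  proof (rule sum.cong[OF refl])
    fix W assume W: "W \<in> Gr V h"
    have SW: "SS W" using W V SS_sub unfolding Gr_def by blast
    show "card (LL W h) = (\<Prod>i<h. ?q ^ h - ?q ^ i)" using card_LL[OF SW] W unfolding Gr_def by simp
  qed
  finally have eq: "card (LL V h) = card (Gr V h) * (\<Prod>i<h. ?q ^ h - ?q ^ i)" by simp
  have eqr: "(\<Prod>i<h. real ?q ^ fvs.dim V - real ?q ^ i) = real (card (Gr V h)) * (\<Prod>i<h. real ?q ^ h - real ?q ^ i)"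
    using arg_cong[OF eq, of real] card_LL[OF V h] real_prod[OF h] real_prod[of h h] q_ge2[where 'a='a] by simp
  have q2: "real ?q \<ge> 2" using q_ge2[where 'a='a] by linarith
  have nz: "(\<Prod>i<h. real ?q ^ h - real ?q ^ i) \<noteq> 0"
  proof -
    have "real ?q ^ i < real ?q ^ h" if "i < h" for i using q2 that by (intro power_strict_increasing) auto
    thus ?thesis by (auto simp: prod_zero_iff) (metis less_irrefl)
  qed
  have "gauss_binom ?q (fvs.dim V) h = (\<Prod>i<h. real ?q ^ fvs.dim V - real ?q ^ i) / (\<Prod>i<h. real ?q ^ h - real ?q ^ i)"
    unfolding gauss_binom_def by (simp add: prod_dividef)
  thus ?thesis using eqr nz by simp
qed



lemma gauss_ge1: assumes "h \<le> k" "q \<ge> 2" shows "gauss_binom q k h \<ge> 1"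
  unfolding gauss_binom_def
proof (rule prod_ge_1)
  fix i assume i: "i \<in> {..<h}"
  have qq: "real q \<ge> 2" using assms by simp
  have a: "real q ^ i < real q ^ h" using i qq by (intro power_strict_increasing) auto
  have b: "real q ^ h \<le> real q ^ k" using assms qq by (intro power_increasing) auto
  show "1 \<le> (real q ^ k - real q ^ i) / (real q ^ h - real q ^ i)" using a b by simp
qed

lemma gauss_hh: assumes "q \<ge> 2" shows "gauss_binom q h h = 1"
  unfolding gauss_binom_def
proof (rule prod.neutral, rule ballI)
  fix i assume i: "i \<in> {..<h}"
  have qq: "real q \<ge> 2" using assms by simp
  have a: "real q ^ i < real q ^ h" using i qq by (intro power_strict_increasing) auto
  thus "(real q ^ h - real q ^ i) / (real q ^ h - real q ^ i) = 1" by simp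
qed

lemma gauss_step: assumes "h \<le> d" "q \<ge> 2" "1 \<le> h"
  shows "gauss_binom q (Suc d) h \<ge> 2 * gauss_binom q d h"
proof -
  have qq: "real q \<ge> 2" using assms by simp
  have "gauss_binom q (Suc d) h \<ge> (\<Prod>i<h. real q * ((real q ^ d - real q ^ i) / (real q ^ h - real q ^ i)))"
    unfolding gauss_binom_def
  proof (rule prod_mono, rule conjI)
    fix i assume i: "i \<in> {..<h}"
    have a: "real q ^ i < real q ^ h" using i qq by (intro power_strict_increasing) auto
    have b: "real q ^ i \<le> real q ^ d" using i assms qq by (intro power_increasing) auto
    have c: "real q ^ i \<le> real q * real q ^ i" using qq by simp
    show "0 \<le> real q * ((real q ^ d - real q ^ i) / (real q ^ h - real q ^ i))" using a b qq by simp
    have "real q * (real q ^ d - real q ^ i) \<le> real q ^ Suc d - real q ^ i" using c by (simp add: algebra_simps)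
    thus "real q * ((real q ^ d - real q ^ i) / (real q ^ h - real q ^ i)) \<le> (real q ^ Suc d - real q ^ i) / (real q ^ h - real q ^ i)"
      using a by (simp add: divide_right_mono)
  qed
  also have "(\<Prod>i<h. real q * ((real q ^ d - real q ^ i) / (real q ^ h - real q ^ i))) = real q ^ h * gauss_binom q d h"
    unfolding gauss_binom_def prod.distrib by simp
  finally have 1: "real q ^ h * gauss_binom q d h \<le> gauss_binom q (Suc d) h" .
  have "2 \<le> real q ^ h" using qq assms(3) by (metis dual_order.trans le_add_diff_inverse power_one_right power_increasing nat_le_linear one_le_numeral  self_le_power order_trans)
  moreover have "gauss_binom q d h \<ge> 1" using gauss_ge1 assms by blast
  ultimately have "2 * gauss_binom q d h \<le> real q ^ h * gauss_binom q d h" by (simp add: mult_right_mono)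
  thus ?thesis using 1 by linarith
qed



lemma span_span_Un: "fvs.span (fvs.span X \<union> Y) = fvs.span (X \<union> Y)"
proof
  show "fvs.span (fvs.span X \<union> Y) \<subseteq> fvs.span (X \<union> Y)"
    by (rule fvs.span_minimal) (auto intro: fvs.span_mono[THEN subsetD] fvs.span_base)
  show "fvs.span (X \<union> Y) \<subseteq> fvs.span (fvs.span X \<union> Y)"
    by (rule fvs.span_mono) (auto intro: fvs.span_base)
qed

lemma exists3: assumes "3 \<le> card X" obtains a b c where "a \<in> X" "b \<in> X" "c \<in> X" "a \<noteq> b" "a \<noteq> c" "b \<noteq> c"
proof -
  obtain S where "S \<subseteq> X" "card S = 3" using assms obtain_subset_with_card_n by metis
  thus ?thesis using that by (auto simp: card_3_iff)
qed

locale code_ctx =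
  fixes C :: "(nat \<Rightarrow> 'a::{field,finite}) set set" and n k \<delta> h :: nat
  assumes cc: "covering_code 3 n k \<delta> C"
    and h1: "1 \<le> h" and hk: "h \<le> k" and hd: "2 * k < 2 * h + \<delta>"

context code_ctx
begin

lemma mem: "A \<in> C \<Longrightarrow> fvs.subspace A \<and> A \<subseteq> Fqn n \<and> fvs.dim A = k"
  using cc unfolding covering_code_def Grass_def by blast

lemma memSS: "A \<in> C \<Longrightarrow> SS A" using mem unfolding SS_def by blast

lemma spSS: "A \<in> C \<Longrightarrow> B \<in> C \<Longrightarrow> SS (fvs.span (A \<union> B))" using mem SS_span_Un by blast

lemma star:
  assumes A: "A \<in> C" and B: "B \<in> C" and D: "D \<in> C" and d: "A \<noteq> B" "A \<noteq> D" "B \<noteq> D"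
  shows "fvs.dim (A \<inter> B) + fvs.dim (fvs.span (A \<union> B) \<inter> D) + \<delta> \<le> 2 * k"
proof -
  have "card {A, B, D} = 3" using d by simp
  moreover have "{A, B, D} \<subseteq> C" using A B D by simp
  ultimately have "k + \<delta> \<le> fvs.dim (fvs.span (\<Union>{A, B, D}))" using cc unfolding covering_code_def by blast
  also have "fvs.span (\<Union>{A, B, D}) = fvs.span (fvs.span (A \<union> B) \<union> D)"
    using span_span_Un[of "A \<union> B" D] by (simp add: Un_assoc)
  finally have 1: "k + \<delta> \<le> fvs.dim (fvs.span (fvs.span (A \<union> B) \<union> D))" .
  have sAB: "fvs.span (A \<union> B) \<subseteq> Fqn n" "fvs.subspace (fvs.span (A \<union> B))"
    using fvs.span_minimal[OF _ Fqn_subspace, of "A \<union> B" n] mem[OF A] mem[OF B] by auto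
  have 2: "fvs.dim (fvs.span (fvs.span (A \<union> B) \<union> D)) + fvs.dim (fvs.span (A \<union> B) \<inter> D) = fvs.dim (fvs.span (A \<union> B)) + k"
    using dim_sum_formula[OF sAB(1) _ sAB(2)] mem[OF D] by metis
  have 3: "fvs.dim (fvs.span (A \<union> B)) + fvs.dim (A \<inter> B) = k + k"
    using dim_sum_formula mem[OF A] mem[OF B] by metis
  show ?thesis using 1 2 3 by linarith
qed


lemma no_two_partners:
  assumes A: "A \<in> C" and B: "B \<in> C" and D: "D \<in> C" and d: "A \<noteq> B" "A \<noteq> D" "B \<noteq> D"
    and hB: "h \<le> fvs.dim (A \<inter> B)" and hD: "h \<le> fvs.dim (A \<inter> D)"
  shows False
proof -
  have "fvs.dim (A \<inter> D) \<le> fvs.dim (fvs.span (A \<union> B) \<inter> D)"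
    using dim_mono[OF SS_Int[OF memSS[OF A] memSS[OF D]] SS_Int[OF spSS[OF A B] memSS[OF D]]]
      fvs.span_superset by blast
  thus False using star[OF A B D d] hB hD hd by linarith
qed

lemma partner_unique:
  assumes A: "A \<in> C" and B: "B \<in> C" and B': "B' \<in> C" and "A \<noteq> B" "A \<noteq> B'"
    and "h \<le> fvs.dim (A \<inter> B)" "h \<le> fvs.dim (A \<inter> B')"
  shows "B = B'"
  using no_two_partners[OF A B B'] assms by blast

definition EE :: "(nat \<Rightarrow> 'a) set \<Rightarrow> (nat \<Rightarrow> 'a) set set" where
  "EE A = {H \<in> Gr (Fqn n) h. \<exists>B\<in>C. B \<noteq> A \<and> h + 1 \<le> fvs.dim (A \<inter> B) \<and> H \<subseteq> fvs.span (A \<union> B)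
      \<and> h - 1 \<le> fvs.dim (H \<inter> (A \<inter> B)) \<and> \<not> H \<subseteq> A \<and> \<not> H \<subseteq> B}"

definition SA :: "(nat \<Rightarrow> 'a) set \<Rightarrow> (nat \<Rightarrow> 'a) set set" where
  "SA A = Gr A h \<union> EE A"

lemma GrSS: "H \<in> Gr X h \<Longrightarrow> SS X \<Longrightarrow> SS H" unfolding Gr_def using SS_sub by blast

lemma EE_not_sub:
  assumes A: "A \<in> C" and H: "H \<in> EE A" and D: "D \<in> C" shows "\<not> H \<subseteq> D"
proof
  assume HD: "H \<subseteq> D"
  obtain B where B: "B \<in> C" "B \<noteq> A" "h + 1 \<le> fvs.dim (A \<inter> B)" "H \<subseteq> fvs.span (A \<union> B)"
    "\<not> H \<subseteq> A" "\<not> H \<subseteq> B" and HG: "H \<in> Gr (Fqn n) h" using H unfolding EE_def by blast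
  have "D \<noteq> A" "D \<noteq> B" using HD B by auto
  have SH: "SS H" using GrSS[OF HG SS_Fqn] .
  have "fvs.dim H \<le> fvs.dim (fvs.span (A \<union> B) \<inter> D)"
    using dim_mono[OF SH SS_Int[OF spSS[OF A B(1)] memSS[OF D]]] HD B(4) by blast
  moreover have "fvs.dim H = h" using HG unfolding Gr_def by simp
  moreover have "fvs.dim (A \<inter> B) + fvs.dim (fvs.span (A \<union> B) \<inter> D) + \<delta> \<le> 2 * k"
    using star[OF A B(1) D B(2)[symmetric]] \<open>D \<noteq> A\<close> \<open>D \<noteq> B\<close> by simp
  ultimately show False using B(3) hd by linarith
qed

lemma EE_two:
  assumes X: "X \<in> C" and Y: "Y \<in> C" and XY: "X \<noteq> Y"
    and HX: "H \<in> Gr (Fqn n) h" "BX \<in> C" "BX \<noteq> X" "h - 1 \<le> fvs.dim (H \<inter> (X \<inter> BX))"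
    and HY: "BY \<in> C" "BY \<noteq> Y" "h + 1 \<le> fvs.dim (Y \<inter> BY)" "H \<subseteq> fvs.span (Y \<union> BY)"
    and ne: "X \<noteq> BY"
  shows False
proof -
  have SH: "SS H" using GrSS[OF HX(1) SS_Fqn] .
  have S1: "SS (H \<inter> (X \<inter> BX))" using SS_Int[OF SH SS_Int[OF memSS[OF X] memSS[OF HX(2)]]] .
  have "fvs.dim (H \<inter> (X \<inter> BX)) \<le> fvs.dim (fvs.span (Y \<union> BY) \<inter> X)"
    using dim_mono[OF S1 SS_Int[OF spSS[OF Y HY(1)] memSS[OF X]]] HY(4) by blast
  moreover have "fvs.dim (Y \<inter> BY) + fvs.dim (fvs.span (Y \<union> BY) \<inter> X) + \<delta> \<le> 2 * k"
    using star[OF Y HY(1) X HY(2)[symmetric]] XY ne by simp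
  ultimately show False using HY(3) HX(4) hd h1 by linarith
qed

lemma g_le2: "card {A \<in> C. H \<in> SA A} \<le> 2"
proof (rule ccontr)
  assume neg: "\<not> ?thesis"
  obtain A1 A2 A3 where A: "A1 \<in> C" "A2 \<in> C" "A3 \<in> C" "H \<in> SA A1" "H \<in> SA A2" "H \<in> SA A3"
    and d: "A1 \<noteq> A2" "A1 \<noteq> A3" "A2 \<noteq> A3"
  proof -
    have "3 \<le> card {A \<in> C. H \<in> SA A}" using neg by simp
    then obtain a b c where "a \<in> {A \<in> C. H \<in> SA A}" "b \<in> {A \<in> C. H \<in> SA A}" "c \<in> {A \<in> C. H \<in> SA A}"
      "a \<noteq> b" "a \<noteq> c" "b \<noteq> c" by (rule exists3)
    thus ?thesis using that by blast
  qed
  show False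
  proof (cases "H \<subseteq> A1 \<or> H \<subseteq> A2 \<or> H \<subseteq> A3")
    case True
    hence notE: "H \<notin> EE A1" "H \<notin> EE A2" "H \<notin> EE A3" using EE_not_sub A by blast+
    hence G: "H \<in> Gr A1 h" "H \<in> Gr A2 h" "H \<in> Gr A3 h" using A unfolding SA_def by auto
    have SH: "SS H" using GrSS[OF G(1) memSS[OF A(1)]] .
    have dh: "fvs.dim H = h" using G(1) unfolding Gr_def by simp
    have "fvs.dim H \<le> fvs.dim (A1 \<inter> A2)"
      using dim_mono[OF SH SS_Int[OF memSS[OF A(1)] memSS[OF A(2)]]] G unfolding Gr_def by blast
    moreover have "fvs.dim H \<le> fvs.dim (A1 \<inter> A3)"
      using dim_mono[OF SH SS_Int[OF memSS[OF A(1)] memSS[OF A(3)]]] G unfolding Gr_def by blast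
    ultimately show False using no_two_partners[OF A(1-3) d] dh by simp
  next
    case False
    hence "H \<notin> Gr A1 h" "H \<notin> Gr A2 h" "H \<notin> Gr A3 h" unfolding Gr_def by auto
    hence E: "H \<in> EE A1" "H \<in> EE A2" "H \<in> EE A3" using A unfolding SA_def by auto
    obtain B1 where B1: "B1 \<in> C" "B1 \<noteq> A1" "h + 1 \<le> fvs.dim (A1 \<inter> B1)" "H \<subseteq> fvs.span (A1 \<union> B1)"
      "h - 1 \<le> fvs.dim (H \<inter> (A1 \<inter> B1))" and HG: "H \<in> Gr (Fqn n) h" using E(1) unfolding EE_def by blast
    obtain B2 where B2: "B2 \<in> C" "B2 \<noteq> A2" "h + 1 \<le> fvs.dim (A2 \<inter> B2)" "H \<subseteq> fvs.span (A2 \<union> B2)"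
      "h - 1 \<le> fvs.dim (H \<inter> (A2 \<inter> B2))" using E(2) unfolding EE_def by blast
    obtain B3 where B3: "B3 \<in> C" "B3 \<noteq> A3" "h + 1 \<le> fvs.dim (A3 \<inter> B3)" "H \<subseteq> fvs.span (A3 \<union> B3)"
      "h - 1 \<le> fvs.dim (H \<inter> (A3 \<inter> B3))" using E(3) unfolding EE_def by blast
    show False
    proof (cases "A1 = B2")
      case False
      thus False using EE_two[OF A(1) A(2) d(1) HG B1(1,2,5) B2(1-4)] by blast
    next
      case True
      show False
      proof (cases "A1 = B3")
        case False
        thus False using EE_two[OF A(1) A(3) d(2) HG B1(1,2,5) B3(1-4)] by blast
      next
        case True2: True
        have "h \<le> fvs.dim (A1 \<inter> A2)" using B2(3) True by (simp add: Int_commute)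
        moreover have "h \<le> fvs.dim (A1 \<inter> A3)" using B3(3) True2 by (simp add: Int_commute)
        ultimately show False using no_two_partners[OF A(1-3) d] by simp
      qed
    qed
  qed
qed

end


lemma not_in_X:
  fixes X :: "(nat \<Rightarrow> 'a::field) set"
  assumes X: "fvs.subspace X" and DX: "D \<subseteq> X" and w: "w \<notin> X"
    and y: "y \<in> fvs.span (insert w D)" and yD: "y \<notin> fvs.span D"
  shows "y \<notin> X"
proof
  assume yX: "y \<in> X"
  obtain c where c: "y - fscale c w \<in> fvs.span D" using y unfolding fvs.span_insert by auto
  have sDX: "fvs.span D \<subseteq> X" using fvs.span_minimal[OF DX X] .
  have "y - (y - fscale c w) \<in> X" using fvs.subspace_diff[OF X yX] c sDX by blast
  hence cw: "fscale c w \<in> X" by simp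
  show False
  proof (cases "c = 0")
    case True
    hence eq: "y - fscale c w = y" by (simp add: fscale_def fun_eq_iff)
    have "y \<in> fvs.span D" using c eq by metis
    thus False using yD by simp
  next
    case False
    have "fscale (inverse c) (fscale c w) = w" using False by (simp add: fscale_def fun_eq_iff)
    thus False using fvs.subspace_scale[OF X cw, of "inverse c"] w by simp
  qed
qed

context code_ctx begin


lemma Grass_eq: "Grass n k = Gr (Fqn n) k" unfolding Grass_def Gr_def by simp

lemma fin_Fqn: "finite (Fqn n :: (nat \<Rightarrow> 'a) set)" using Fqn_card by blast

lemma fin_C: "finite C"
proof -
  have "C \<subseteq> Gr (Fqn n) k" using cc unfolding covering_code_def Grass_def Gr_def by blast
  thus ?thesis using Gr_finite[OF fin_Fqn] finite_subset by blast
qed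

lemma SA_sub: "A \<in> C \<Longrightarrow> SA A \<subseteq> Gr (Fqn n) h"
  using mem unfolding SA_def EE_def Gr_def by auto

lemma SA_fin: "A \<in> C \<Longrightarrow> finite (SA A)"
  using SA_sub Gr_finite[OF fin_Fqn] finite_subset by blast

lemma g_pos: "A \<in> C \<Longrightarrow> H \<in> SA A \<Longrightarrow> 1 \<le> card {A \<in> C. H \<in> SA A}"
proof -
  assume "A \<in> C" "H \<in> SA A"
  hence "A \<in> {A \<in> C. H \<in> SA A}" by simp
  moreover have "finite {A \<in> C. H \<in> SA A}" using fin_C by simp
  ultimately show ?thesis by (metis One_nat_def Suc_leI card_gt_0_iff empty_iff)
qed

lemma inv_g_half: "A \<in> C \<Longrightarrow> H \<in> SA A \<Longrightarrow> 1/2 \<le> 1 / real (card {A \<in> C. H \<in> SA A})"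
proof -
  assume a: "A \<in> C" "H \<in> SA A"
  have "1 \<le> real (card {A \<in> C. H \<in> SA A})" "real (card {A \<in> C. H \<in> SA A}) \<le> 2"
    using g_pos[OF a] g_le2[of H] by auto
  thus ?thesis by (simp add: field_simps)
qed

lemma g_one:
  assumes A: "A \<in> C" and H: "H \<in> Gr A h" and no: "\<And>B. B \<in> C \<Longrightarrow> B \<noteq> A \<Longrightarrow> \<not> H \<subseteq> B"
  shows "card {A' \<in> C. H \<in> SA A'} = 1"
proof -
  have "{A' \<in> C. H \<in> SA A'} = {A}"
  proof
    show "{A' \<in> C. H \<in> SA A'} \<subseteq> {A}"
    proof clarify
      fix A' assume A': "A' \<in> C" "H \<in> SA A'"
      have HA: "H \<subseteq> A" using H unfolding Gr_def by simp
      have "H \<notin> EE A'" using EE_not_sub[OF A'(1) _ A] HA by blast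
      hence "H \<subseteq> A'" using A'(2) unfolding SA_def Gr_def by auto
      thus "A' = A" using no A'(1) by blast
    qed
    show "{A} \<subseteq> {A' \<in> C. H \<in> SA A'}" using A H unfolding SA_def by simp
  qed
  thus ?thesis by simp
qed

lemma EE_big:
  assumes A: "A \<in> C" and B: "B \<in> C" and BA: "B \<noteq> A" and d: "h + 1 \<le> fvs.dim (A \<inter> B)"
  shows "gauss_binom (card (UNIV::'a set)) (Suc (fvs.dim (A \<inter> B))) h - gauss_binom (card (UNIV::'a set)) (fvs.dim (A \<inter> B)) h \<le> real (card (EE A))"
proof -
  define D where "D = A \<inter> B"
  have mA: "fvs.subspace A" "A \<subseteq> Fqn n" "fvs.dim A = k" using mem[OF A] by auto
  have mB: "fvs.subspace B" "B \<subseteq> Fqn n" "fvs.dim B = k" using mem[OF B] by auto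
  have nAB: "\<not> A \<subseteq> B"
  proof
    assume "A \<subseteq> B"
    hence "A = B" using dim_eq_sub[OF memSS[OF A] memSS[OF B]] mA mB by simp
    thus False using BA by simp
  qed
  have nBA: "\<not> B \<subseteq> A"
  proof
    assume "B \<subseteq> A"
    hence "B = A" using dim_eq_sub[OF memSS[OF B] memSS[OF A]] mA mB by simp
    thus False using BA by simp
  qed
  obtain a where a: "a \<in> A" "a \<notin> B" using nAB by blast
  obtain b where b: "b \<in> B" "b \<notin> A" using nBA by blast
  define w where "w = a + b"
  have wS: "w \<in> fvs.span (A \<union> B)" unfolding w_def using a b by (intro fvs.span_add fvs.span_base) auto
  have wA: "w \<notin> A"
  proof
    assume "w \<in> A"
    hence "w - a \<in> A" using fvs.subspace_diff[OF mA(1)] a by blast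
    thus False using b unfolding w_def by simp
  qed
  have wB: "w \<notin> B"
  proof
    assume "w \<in> B"
    hence "w - b \<in> B" using fvs.subspace_diff[OF mB(1)] b by blast
    thus False using a unfolding w_def by simp
  qed
  have SD: "SS D" unfolding D_def using SS_Int[OF memSS[OF A] memSS[OF B]] .
  have sD: "fvs.span D = D" using SS_subspace[OF SD] by simp
  have cD: "finite D" "card D = card (UNIV::'a set) ^ fvs.dim D" using SS_card[OF SD] by auto
  define U where "U = fvs.span (insert w D)"
  have wD: "w \<notin> fvs.span D" using wA sD unfolding D_def by (metis IntD1)
  have cU: "card U = card (UNIV::'a set) * card D" using card_span_insert[OF _ wD] cD sD unfolding U_def by simp
  have spF: "fvs.span (A \<union> B) \<subseteq> Fqn n"
    using fvs.span_minimal[OF _ Fqn_subspace, of "A \<union> B" n] mA mB by auto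
  have UAB: "U \<subseteq> fvs.span (A \<union> B)"
    unfolding U_def D_def using wS by (intro fvs.span_minimal) (auto intro: fvs.span_base)
  have SU: "SS U" unfolding SS_def U_def using UAB spF U_def by auto
  have dU: "fvs.dim U = Suc (fvs.dim D)" using dim_card[OF SU] cU cD by simp
  have DU: "D \<subseteq> U" unfolding U_def using fvs.span_superset by blast
  have incl: "Gr U h - Gr D h \<subseteq> EE A"
  proof
    fix H assume H: "H \<in> Gr U h - Gr D h"
    have Hs: "fvs.subspace H" "H \<subseteq> U" "fvs.dim H = h" using H unfolding Gr_def by auto
    have HD: "\<not> H \<subseteq> D" using H Hs unfolding Gr_def by auto
    then obtain y where y: "y \<in> H" "y \<notin> D" by blast
    have yU: "y \<in> U" using y Hs by blast
    have yU': "y \<in> fvs.span (insert w D)" using yU unfolding U_def .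
    have ySD: "y \<notin> fvs.span D" unfolding sD using y(2) .
    have yA: "y \<notin> A" using not_in_X[OF mA(1) _ wA yU' ySD] unfolding D_def by blast
    have yB: "y \<notin> B" using not_in_X[OF mB(1) _ wB yU' ySD] unfolding D_def by blast
    have HF: "H \<subseteq> Fqn n" using Hs UAB spF by blast
    have SDF: "D \<subseteq> Fqn n" using mA unfolding D_def by auto
    have sdf: "fvs.dim (fvs.span (H \<union> D)) + fvs.dim (H \<inter> D) = fvs.dim H + fvs.dim D"
      using dim_sum_formula[OF HF SDF Hs(1) SS_subspace[OF SD]] .
    have "fvs.span (H \<union> D) \<subseteq> U" using Hs DU SS_subspace[OF SU] by (intro fvs.span_minimal) auto
    hence "fvs.dim (fvs.span (H \<union> D)) \<le> fvs.dim U" using dim_mono[OF SS_span_Un[OF HF SDF] SU] by simp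
    hence dd: "h - 1 \<le> fvs.dim (H \<inter> (A \<inter> B))" using sdf dU Hs(3) unfolding D_def by linarith
    have "H \<in> Gr (Fqn n) h" using Hs HF unfolding Gr_def by simp
    thus "H \<in> EE A" unfolding EE_def using B BA d dd Hs UAB y yA yB by blast
  qed
  have finU: "finite (Gr U h)" using Gr_finite SS_card[OF SU] by blast
  have sub: "Gr D h \<subseteq> Gr U h" using DU unfolding Gr_def by auto
  have finE: "finite (EE A)" using SA_fin[OF A] unfolding SA_def by simp
  have "card (Gr U h - Gr D h) \<le> card (EE A)" using card_mono[OF finE incl] .
  moreover have "card (Gr U h - Gr D h) = card (Gr U h) - card (Gr D h)"
    using card_Diff_subset[OF finite_subset[OF sub finU] sub] .
  moreover have "card (Gr D h) \<le> card (Gr U h)" using card_mono[OF finU sub] .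
  ultimately have "real (card (Gr U h)) - real (card (Gr D h)) \<le> real (card (EE A))" by linarith
  moreover have "real (card (Gr U h)) = gauss_binom (card (UNIV::'a set)) (Suc (fvs.dim D)) h"
    using card_Gr[OF SU] dU d unfolding D_def by simp
  moreover have "real (card (Gr D h)) = gauss_binom (card (UNIV::'a set)) (fvs.dim D) h"
    using card_Gr[OF SD] d unfolding D_def by simp
  ultimately show ?thesis unfolding D_def by simp
qed

end


context code_ctx begin

lemma perA:
  assumes A: "A \<in> C"
  shows "gauss_binom (card (UNIV::'a set)) k h - 1/2 \<le> (\<Sum>H\<in>SA A. 1 / real (card {A \<in> C. H \<in> SA A}))"
proof -
  let ?g = "\<lambda>H. 1 / real (card {A \<in> C. H \<in> SA A})"
  let ?K = "gauss_binom (card (UNIV::'a set)) k h"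
  have q2: "2 \<le> card (UNIV::'a set)" by (rule q_ge2)
  have mA: "fvs.subspace A" "A \<subseteq> Fqn n" "fvs.dim A = k" using mem[OF A] by auto
  have finG: "finite (Gr A h)" using Gr_finite SS_card[OF memSS[OF A]] by blast
  have finE: "finite (EE A)" using SA_fin[OF A] unfolding SA_def by simp
  have disj: "Gr A h \<inter> EE A = {}" using EE_not_sub[OF A _ A] unfolding Gr_def by blast
  have split: "(\<Sum>H\<in>SA A. ?g H) = (\<Sum>H\<in>Gr A h. ?g H) + (\<Sum>H\<in>EE A. ?g H)"
    unfolding SA_def by (rule sum.union_disjoint[OF finG finE disj])
  have Epart: "real (card (EE A)) / 2 \<le> (\<Sum>H\<in>EE A. ?g H)"
  proof -
    have "(\<Sum>H\<in>EE A. (1::real)/2) \<le> (\<Sum>H\<in>EE A. ?g H)"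
      by (rule sum_mono) (use inv_g_half[OF A] in \<open>auto simp: SA_def\<close>)
    thus ?thesis by simp
  qed
  have Epos: "0 \<le> (\<Sum>H\<in>EE A. ?g H)" by (rule sum_nonneg) simp
  have cardA: "real (card (Gr A h)) = ?K" using card_Gr[OF memSS[OF A]] mA hk by simp
  show ?thesis
  proof (cases "\<exists>B\<in>C. B \<noteq> A \<and> h \<le> fvs.dim (A \<inter> B)")
    case False
    have "(\<Sum>H\<in>Gr A h. ?g H) = (\<Sum>H\<in>Gr A h. 1)"
    proof (rule sum.cong[OF refl])
      fix H assume H: "H \<in> Gr A h"
      have "\<not> H \<subseteq> B" if B: "B \<in> C" "B \<noteq> A" for B
      proof
        assume HB: "H \<subseteq> B"
        have SH: "SS H" using GrSS[OF H memSS[OF A]] .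
        have "fvs.dim H \<le> fvs.dim (A \<inter> B)"
          using dim_mono[OF SH SS_Int[OF memSS[OF A] memSS[OF B(1)]]] H HB unfolding Gr_def by blast
        thus False using False B H unfolding Gr_def by auto
      qed
      thus "?g H = 1" using g_one[OF A H] by simp
    qed
    hence "(\<Sum>H\<in>Gr A h. ?g H) = ?K" using cardA by simp
    thus ?thesis using split Epos by linarith
  next
    case True
    then obtain B where B: "B \<in> C" "B \<noteq> A" "h \<le> fvs.dim (A \<inter> B)" by blast
    define d where "d = fvs.dim (A \<inter> B)"
    have SAB: "SS (A \<inter> B)" using SS_Int[OF memSS[OF A] memSS[OF B(1)]] .
    have "(\<Sum>H\<in>Gr A h. (if H \<subseteq> B then 1/2 else 1)) \<le> (\<Sum>H\<in>Gr A h. ?g H)"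
    proof (rule sum_mono)
      fix H assume H: "H \<in> Gr A h"
      show "(if H \<subseteq> B then 1/2 else 1) \<le> ?g H"
      proof (cases "H \<subseteq> B")
        case True thus ?thesis using inv_g_half[OF A] H unfolding SA_def by simp
      next
        case HnB: False
        have "\<not> H \<subseteq> B'" if B': "B' \<in> C" "B' \<noteq> A" for B'
        proof
          assume HB: "H \<subseteq> B'"
          have SH: "SS H" using GrSS[OF H memSS[OF A]] .
          have "fvs.dim H \<le> fvs.dim (A \<inter> B')"
            using dim_mono[OF SH SS_Int[OF memSS[OF A] memSS[OF B'(1)]]] H HB unfolding Gr_def by blast
          hence "h \<le> fvs.dim (A \<inter> B')" using H unfolding Gr_def by simp
          hence "B = B'" using partner_unique[OF A B(1) B'(1)] B B' by metis
          thus False using HB HnB by simp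
        qed
        thus ?thesis using g_one[OF A H] HnB by simp
      qed
    qed
    moreover have "(\<Sum>H\<in>Gr A h. (if H \<subseteq> B then 1/2 else 1)) = ?K - real (card (Gr (A \<inter> B) h)) / 2"
    proof -
      have eqs: "{H \<in> Gr A h. H \<subseteq> B} = Gr (A \<inter> B) h" unfolding Gr_def by auto
      have "(\<Sum>H\<in>Gr A h. (if H \<subseteq> B then (1::real)/2 else 1)) = (\<Sum>H\<in>Gr A h. 1 - (if H \<subseteq> B then (1::real)/2 else 0))"
        by (rule sum.cong[OF refl]) simp
      also have "\<dots> = real (card (Gr A h)) - (\<Sum>H\<in>Gr A h. (if H \<subseteq> B then (1::real)/2 else 0))"
        by (simp add: sum_subtractf)
      also have "(\<Sum>H\<in>Gr A h. (if H \<subseteq> B then (1::real)/2 else 0)) = (\<Sum>H\<in>{H \<in> Gr A h. H \<subseteq> B}. 1/2)"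
        using sum.inter_filter[OF finG, of "\<lambda>_. (1::real)/2" "\<lambda>H. H \<subseteq> B"] by simp
      also have "\<dots> = real (card (Gr (A \<inter> B) h)) / 2" unfolding eqs by simp
      finally show ?thesis using cardA by simp
    qed
    moreover have cd: "real (card (Gr (A \<inter> B) h)) = gauss_binom (card (UNIV::'a set)) d h"
      using card_Gr[OF SAB] B unfolding d_def by simp
    ultimately have Gpart: "?K - gauss_binom (card (UNIV::'a set)) d h / 2 \<le> (\<Sum>H\<in>Gr A h. ?g H)" by simp
    show ?thesis
    proof (cases "d = h")
      case True
      hence "gauss_binom (card (UNIV::'a set)) d h = 1" using gauss_hh q2 by simp
      thus ?thesis using Gpart split Epos by simp
    next
      case False
      hence d1: "h + 1 \<le> fvs.dim (A \<inter> B)" using B unfolding d_def by simp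
      have "gauss_binom (card (UNIV::'a set)) (Suc d) h - gauss_binom (card (UNIV::'a set)) d h \<le> real (card (EE A))"
        using EE_big[OF A B(1,2) d1] unfolding d_def .
      moreover have "gauss_binom (card (UNIV::'a set)) (Suc d) h \<ge> 2 * gauss_binom (card (UNIV::'a set)) d h"
        using gauss_step[of h d] q2 h1 B unfolding d_def by simp
      ultimately show ?thesis using Gpart split Epart by linarith
    qed
  qed
qed

lemma total:
  "(\<Sum>A\<in>C. \<Sum>H\<in>SA A. 1 / real (card {A \<in> C. H \<in> SA A})) = real (card (\<Union>A\<in>C. SA A))"
proof -
  let ?U = "\<Union>A\<in>C. SA A"
  let ?g = "\<lambda>H. 1 / real (card {A \<in> C. H \<in> SA A})"
  have finU: "finite ?U" using fin_C SA_fin by blast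
  have "real (card ?U) = (\<Sum>H\<in>?U. 1)" by simp
  also have "\<dots> = (\<Sum>H\<in>?U. \<Sum>A\<in>C. if H \<in> SA A then ?g H else 0)"
  proof (rule sum.cong[OF refl])
    fix H assume H: "H \<in> ?U"
    then obtain A where A: "A \<in> C" "H \<in> SA A" by blast
    have "(\<Sum>A\<in>C. if H \<in> SA A then ?g H else 0) = (\<Sum>A\<in>{A \<in> C. H \<in> SA A}. ?g H)"
      using sum.inter_filter[OF fin_C, of "\<lambda>_. ?g H" "\<lambda>A. H \<in> SA A"] by simp
    also have "\<dots> = 1" using g_pos[OF A] by simp
    finally show "1 = (\<Sum>A\<in>C. if H \<in> SA A then ?g H else 0)" by simp
  qed
  also have "\<dots> = (\<Sum>A\<in>C. \<Sum>H\<in>?U. if H \<in> SA A then ?g H else 0)" by (rule sum.swap)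
  also have "\<dots> = (\<Sum>A\<in>C. \<Sum>H\<in>SA A. ?g H)"
  proof (rule sum.cong[OF refl])
    fix A assume A: "A \<in> C"
    have "(\<Sum>H\<in>?U. if H \<in> SA A then ?g H else 0) = (\<Sum>H\<in>{H \<in> ?U. H \<in> SA A}. ?g H)"
      using sum.inter_filter[OF finU, of ?g "\<lambda>H. H \<in> SA A"] by simp
    also have "{H \<in> ?U. H \<in> SA A} = SA A" using A by blast
    finally show "(\<Sum>H\<in>?U. if H \<in> SA A then ?g H else 0) = (\<Sum>H\<in>SA A. ?g H)" .
  qed
  finally show ?thesis by simp
qed

lemma final_bound:
  assumes kn: "k \<le> n"
  shows "real (card C) * (gauss_binom (card (UNIV::'a set)) k h - 1/2) \<le> gauss_binom (card (UNIV::'a set)) n h"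
proof -
  let ?U = "\<Union>A\<in>C. SA A"
  have "real (card C) * (gauss_binom (card (UNIV::'a set)) k h - 1/2) = (\<Sum>A\<in>C. gauss_binom (card (UNIV::'a set)) k h - 1/2)"
    by simp
  also have "\<dots> \<le> (\<Sum>A\<in>C. \<Sum>H\<in>SA A. 1 / real (card {A \<in> C. H \<in> SA A}))"
    by (rule sum_mono) (rule perA)
  also have "\<dots> = real (card ?U)" by (rule total)
  also have "\<dots> \<le> real (card (Gr (Fqn n :: (nat \<Rightarrow> 'a) set) h))"
  proof -
    have "?U \<subseteq> Gr (Fqn n) h" using SA_sub by blast
    thus ?thesis using card_mono[OF Gr_finite[OF fin_Fqn]] by simp
  qed
  also have "\<dots> = gauss_binom (card (UNIV::'a set)) n h"
  proof -
    have e: "fvs.dim (Fqn n :: (nat \<Rightarrow> 'a) set) = n" by (rule dim_Fqn)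
    have "real (card (Gr (Fqn n :: (nat \<Rightarrow> 'a) set) h)) = gauss_binom (card (UNIV::'a set)) (fvs.dim (Fqn n :: (nat \<Rightarrow> 'a) set)) h"
      by (rule card_Gr[OF SS_Fqn]) (use e hk kn in simp)
    thus ?thesis using e by simp
  qed
  finally show ?thesis .
qed

end


theorem mainTheorem3:
  fixes q n k \<delta> h :: nat
  assumes "q = card (UNIV :: 'a set)"
    and "0 < n" and "0 < k" and "0 < \<delta>" and "k \<le> n" and "\<delta> \<le> 2 * k"
    and "h = nat \<lfloor>real k + 1 - real \<delta> / 2\<rfloor>"
  shows "real (Bq TYPE('a::{field,finite}) n k \<delta> 3)
           \<le> (1 + 1 / (2 * gauss_binom q k h - 1)) * (gauss_binom q n h / gauss_binom q k h)"
proof -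
  define r where "r = real k + 1 - real \<delta> / 2"
  have r1: "1 \<le> r" using assms(6) unfolding r_def by simp
  have fl: "1 \<le> \<lfloor>r\<rfloor>" using r1 by linarith
  have hr: "real h = of_int \<lfloor>r\<rfloor>" using assms(7) fl unfolding r_def by simp
  have hr1: "real h \<le> r" "r < real h + 1" using hr by linarith+
  have h1: "1 \<le> h" using hr fl by linarith
  have hk: "h \<le> k" using hr1 assms(4) unfolding r_def by linarith
  have hd: "2 * k < 2 * h + \<delta>"
  proof -
    have "real (2 * k) < real (2 * h + \<delta>)" using hr1 unfolding r_def by simp
    thus ?thesis by linarith
  qed
  let ?codes = "{C :: (nat \<Rightarrow> 'a) set set. covering_code 3 n k \<delta> C}"
  let ?K = "gauss_binom q k h" and ?M = "gauss_binom q n h"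
  have K1: "1 \<le> ?K" using gauss_ge1[OF hk] q_ge2[where 'a='a] assms(1) by simp
  have fin: "finite ?codes"
  proof (rule finite_subset[of _ "Pow (Grass n k)"])
    show "?codes \<subseteq> Pow (Grass n k)" unfolding covering_code_def by auto
    have "finite (Gr (Fqn n :: (nat \<Rightarrow> 'a) set) k)" using Gr_finite Fqn_card by blast
    thus "finite (Pow (Grass n k :: (nat \<Rightarrow> 'a) set set))" unfolding Grass_def Gr_def by simp
  qed
  have ne: "{} \<in> ?codes" unfolding covering_code_def by auto
  have "Bq TYPE('a) n k \<delta> 3 \<in> card ` ?codes"
    unfolding Bq_def using fin ne by (intro Max_in) auto
  then obtain C where C0: "C \<in> ?codes" and BC: "Bq TYPE('a) n k \<delta> 3 = card C" by (rule imageE)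
  have C: "covering_code 3 n k \<delta> C" using C0 by simp
  interpret code_ctx C n k \<delta> h using C h1 hk hd by unfold_locales
  have main: "real (card C) * (?K - 1/2) \<le> ?M" using final_bound[OF assms(5)] assms(1) by simp
  have "real (card C) \<le> ?M / (?K - 1/2)" using main K1 by (simp add: field_simps)
  also have "?M / (?K - 1/2) = (1 + 1 / (2 * ?K - 1)) * (?M / ?K)" using K1 by (simp add: field_simps)
  finally show ?thesis using BC by simp
qed


end
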